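(* Let $\mathcal{X}=\{\mathbf{x}_1,\dots,\mathbf{x}_N\}\subset\mathbb{R}^d$ with $N\ge2$ and with pairwise distinct points, i.e. $\mathbf{x}_i\neq\mathbf{x}_j$ for $i\ne j$. Define the leave-one-out (LOO) total log-likelihood of the adaptive KDE model $$L_{\text{LOO}}(\sigma_1,\dots,\sigma_N)=\sum_{i=1}^N\log\sum_{j\neq i}\mathcal{N}(\mathbf{x}_i;\mathbf{x}_j,\sigma_j^2\mathbf{I}),\qquad \sigma\in(0,\infty)^N.$$ Then there exists $\varepsilon>0$, depending only on the dataset, such that every maximizer $\sigma^*\in(0,\infty)^N$ of $L_{\text{LOO}}$ satisfies $\sigma_j^*\ge\varepsilon$ for all $j=1,\dots,N$. In particular, no optimal solution of the LOO maximum log-likelihood problem exhibits data-copying (no bandwidth tends to $0^+$).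
   Context: $\mathcal{N}(\mathbf{x};\boldsymbol\mu,\sigma^2\mathbf{I})=(2\pi\sigma^2)^{-d/2}\exp\!\big(-\lVert\mathbf{x}-\boldsymbol\mu\rVert^2/(2\sigma^2)\big)$ denotes the isotropic Gaussian density on $\mathbb{R}^d$. "Data-copying" means that some bandwidth $\sigma_j\to0^+$. *)

theory Defs
  imports "HOL-Analysis.Analysis"
begin

definition gauss_density :: "'a::euclidean_space \<Rightarrow> 'a \<Rightarrow> real \<Rightarrow> real" where
  "gauss_density x mu s2 =
     (2 * pi * s2) powr (- real DIM('a) / 2) * exp (- (norm (x - mu))\<^sup>2 / (2 * s2))"

definition L_LOO :: "nat \<Rightarrow> (nat \<Rightarrow> 'a::euclidean_space) \<Rightarrow> (nat \<Rightarrow> real) \<Rightarrow> real" where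
  "L_LOO N x sg =
     (\<Sum>i<N. ln (\<Sum>j\<in>{..<N} - {i}. gauss_density (x i) (x j) ((sg j)\<^sup>2)))"

end

theory Submission imports Defs begin

lemma gauss_pos:
  fixes x mu :: "'a::euclidean_space"
  assumes "t > 0" shows "gauss_density x mu t > 0"
  using assms unfolding gauss_density_def by simp

lemma gauss_mono:
  fixes x mu :: "'a::euclidean_space"
  assumes t: "0 < t" "t < t0" and r: "t0 * real DIM('a) \<le> (norm (x - mu))\<^sup>2"
  shows "gauss_density x mu t < gauss_density x mu t0"
proof -
  define d where "d = real DIM('a)"
  define r2 where "r2 = (norm (x - mu))\<^sup>2"
  have d: "d \<ge> 1" unfolding d_def by (simp add: DIM_positive Suc_le_eq)
  have t0: "t0 > 0" using t by simp
  have lnq: "ln (t0 / t) < t0 / t - 1"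
    using ln_add_one_self_less_self[of "t0/t - 1"] t by simp
  have lndiff: "ln (2*pi*t0) - ln (2*pi*t) = ln (t0/t)"
    using t t0 by (simp add: ln_mult ln_div)
  have "d * ln (t0/t) < d * (t0/t - 1)" using lnq d by simp
  also have "d * (t0/t - 1) = d * t0 * (t0 - t) / (t * t0)" using t t0 by (simp add: field_simps)
  also have "\<dots> \<le> r2 * (t0 - t) / (t * t0)"
    using r t t0 unfolding d_def r2_def by (intro divide_right_mono mult_right_mono) (auto simp: mult.commute)
  also have "\<dots> = r2 / t - r2 / t0" using t t0 by (simp add: field_simps)
  finally have key: "d * ln (t0/t) < r2 / t - r2 / t0" .
  have "ln (2*pi*t) * (- d / 2) - r2 / (2*t) < ln (2*pi*t0) * (- d / 2) - r2 / (2*t0)"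
    using key lndiff by (simp add: field_simps)
  hence "exp (ln (2*pi*t) * (- d / 2) - r2 / (2*t)) < exp (ln (2*pi*t0) * (- d / 2) - r2 / (2*t0))"
    by simp
  moreover have "gauss_density x mu u = exp (ln (2 * pi * u) * (- d / 2) - r2 / (2 * u))" if "u > 0" for u
  proof -
    have "gauss_density x mu u = exp (- d / 2 * ln (2 * pi * u)) * exp (- r2 / (2 * u))"
      using that unfolding gauss_density_def d_def r2_def by (simp add: powr_def)
    also have "\<dots> = exp (ln (2 * pi * u) * (- d / 2) - r2 / (2 * u))"
      by (simp add: exp_add[symmetric] mult.commute)
    finally show ?thesis .
  qed
  ultimately show ?thesis using t t0 by simp
qed
theorem theorem2:
  fixes N :: nat and x :: "nat \<Rightarrow> 'a::euclidean_space"
  assumes "N \<ge> 2"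
    and "inj_on x {..<N}"
  shows "\<exists>\<epsilon>>0. \<forall>\<sigma> :: nat \<Rightarrow> real.
           ((\<forall>j<N. \<sigma> j > 0) \<and>
            (\<forall>\<tau> :: nat \<Rightarrow> real. (\<forall>j<N. \<tau> j > 0) \<longrightarrow> L_LOO N x \<tau> \<le> L_LOO N x \<sigma>))
           \<longrightarrow> (\<forall>j<N. \<sigma> j \<ge> \<epsilon>)"
proof -
  define P where "P = {(i, j). i < N \<and> j < N \<and> i \<noteq> j}"
  define D where "D = (\<lambda>(i, j). norm (x i - x j)) ` P"
  define m where "m = Min D"
  define d where "d = real DIM('a)"
  define e where "e = m / sqrt d"
  have d: "d \<ge> 1" unfolding d_def by (simp add: DIM_positive Suc_le_eq)
  have finP: "finite P" unfolding P_def
    by (rule finite_subset[of _ "{..<N} \<times> {..<N}"]) auto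
  have "(0, 1) \<in> P" using assms(1) unfolding P_def by auto
  hence Dne: "D \<noteq> {}" unfolding D_def by auto
  have finD: "finite D" unfolding D_def using finP by simp
  have Dpos: "\<forall>r\<in>D. r > 0"
    using assms(2) unfolding D_def P_def by (auto simp: inj_on_def)
  have mpos: "m > 0" unfolding m_def using finD Dne Dpos by simp
  have mle: "m \<le> norm (x i - x k)" if "i < N" "k < N" "i \<noteq> k" for i k
  proof -
    have "norm (x i - x k) \<in> D" unfolding D_def P_def using that by force
    thus ?thesis unfolding m_def using finD by simp
  qed
  have epos: "e > 0" unfolding e_def using mpos d by simp
  have e2: "e\<^sup>2 * d = m\<^sup>2" unfolding e_def using d by (simp add: power_divide)
  show ?thesis
  proof (intro exI[of _ e] conjI epos allI impI)
    fix \<sigma> :: "nat \<Rightarrow> real" and j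
    assume H: "(\<forall>j<N. \<sigma> j > 0) \<and>
            (\<forall>\<tau> :: nat \<Rightarrow> real. (\<forall>j<N. \<tau> j > 0) \<longrightarrow> L_LOO N x \<tau> \<le> L_LOO N x \<sigma>)"
      and j: "j < N"
    show "\<sigma> j \<ge> e"
    proof (rule ccontr)
      assume "\<not> \<sigma> j \<ge> e"
      hence lt: "\<sigma> j < e" by simp
      have spos: "\<And>k. k < N \<Longrightarrow> \<sigma> k > 0" using H by blast
      define \<tau> where "\<tau> = \<sigma>(j := e)"
      have tpos: "\<forall>k<N. \<tau> k > 0" using spos epos unfolding \<tau>_def by auto
      define S where "S = (\<lambda>sg i. \<Sum>k\<in>{..<N} - {i}. gauss_density (x i) (x k) ((sg k)\<^sup>2))"
      have Lrep: "L_LOO N x sg = (\<Sum>i<N. ln (S sg i))" for sg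
        unfolding L_LOO_def S_def by simp
      have sq: "(\<sigma> j)\<^sup>2 < e\<^sup>2" using lt spos[OF j] by (simp add: power_strict_mono)
      have term_le: "gauss_density (x i) (x k) ((\<sigma> k)\<^sup>2) \<le> gauss_density (x i) (x k) ((\<tau> k)\<^sup>2)"
        and term_lt: "k = j \<Longrightarrow> gauss_density (x i) (x k) ((\<sigma> k)\<^sup>2) < gauss_density (x i) (x k) ((\<tau> k)\<^sup>2)"
        if "i < N" "k < N" "k \<noteq> i" for i k
      proof -
        have lt2: "gauss_density (x i) (x j) ((\<sigma> j)\<^sup>2) < gauss_density (x i) (x j) (e\<^sup>2)"
          if "k = j"
        proof (rule gauss_mono)
          show "0 < (\<sigma> j)\<^sup>2" using spos[OF j] by simp
          show "(\<sigma> j)\<^sup>2 < e\<^sup>2" by (fact sq)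
          have "m\<^sup>2 \<le> (norm (x i - x j))\<^sup>2"
            using mle[of i j] \<open>i < N\<close> j \<open>k \<noteq> i\<close> that mpos by (intro power_mono) auto
          thus "e\<^sup>2 * real DIM('a) \<le> (norm (x i - x j))\<^sup>2" using e2 unfolding d_def by simp
        qed
        show "k = j \<Longrightarrow> gauss_density (x i) (x k) ((\<sigma> k)\<^sup>2) < gauss_density (x i) (x k) ((\<tau> k)\<^sup>2)"
          using lt2 unfolding \<tau>_def by simp
        thus "gauss_density (x i) (x k) ((\<sigma> k)\<^sup>2) \<le> gauss_density (x i) (x k) ((\<tau> k)\<^sup>2)"
          unfolding \<tau>_def by (cases "k = j") auto
      qed
      have Spos: "S \<sigma> i > 0" if "i < N" for i
      proof -
        define k where "k = (if i = 0 then 1 else (0::nat))"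
        have k: "k < N" "k \<noteq> i" using assms(1) that unfolding k_def by auto
        show ?thesis unfolding S_def
        proof (rule sum_pos2[of _ k])
          show "k \<in> {..<N} - {i}" using k by simp
          show "0 < gauss_density (x i) (x k) ((\<sigma> k)\<^sup>2)" using spos[OF k(1)] by (intro gauss_pos) simp
          show "\<And>l. l \<in> {..<N} - {i} \<Longrightarrow> 0 \<le> gauss_density (x i) (x l) ((\<sigma> l)\<^sup>2)"
            using spos by (intro less_imp_le gauss_pos) (simp add: less_imp_neq[symmetric])
        qed simp
      qed
      have Sle: "S \<sigma> i \<le> S \<tau> i" if "i < N" for i
        unfolding S_def using that by (intro sum_mono term_le) auto
      have Slt: "S \<sigma> i < S \<tau> i" if "i < N" "i \<noteq> j" for i
        unfolding S_def using that j
        by (intro sum_strict_mono_ex1) (auto intro!: term_le term_lt bexI[of _ j])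
      define i where "i = (if j = 0 then 1 else (0::nat))"
      have i: "i < N" "i \<noteq> j" using assms(1) j unfolding i_def by auto
      have "L_LOO N x \<sigma> < L_LOO N x \<tau>" unfolding Lrep
      proof (rule sum_strict_mono_ex1)
        show "\<forall>l\<in>{..<N}. ln (S \<sigma> l) \<le> ln (S \<tau> l)"
          using Spos Sle by (auto intro: ln_mono order_less_le_trans)
        show "\<exists>l\<in>{..<N}. ln (S \<sigma> l) < ln (S \<tau> l)"
        proof (intro bexI[of _ i])
          have "0 < S \<sigma> i" "S \<sigma> i < S \<tau> i" using Spos Slt i by auto
          thus "ln (S \<sigma> i) < ln (S \<tau> i)" by simp
        qed (use i in simp)
      qed simp
      moreover have "L_LOO N x \<tau> \<le> L_LOO N x \<sigma>" using H tpos by blast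
      ultimately show False by simp
    qed
  qed
qed

end
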